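(* Let $k_1,k_2,n$ be positive integers with $k_1\le k_2$ and $k_1+k_2\ge 4$. If there exists a purely singular perfect $B[-k_1,k_2](2^n)$ set, then $2^n=k_1+k_2+1$.
   Context: For a positive integer $q$, $\mathbb{Z}_q$ is the ring of integers modulo $q$. For integers $a\le b$, $[a,b]^\ast=\{a,a+1,\dots,b\}\setminus\{0\}$. For non-negative integers $0\le k_1\le k_2$ and a positive integer $q$, a set $B\subseteq\mathbb{Z}_q$ is a $B[-k_1,k_2](q)$ set (splitter set) if, for each $b\in B$, the set $\{ab \bmod q: a\in[-k_1,k_2]^\ast\}$ consists of $k_1+k_2$ distinct nonzero elements, and these sets are pairwise disjoint for distinct $b\in B$. Such a set is perfect if $|B|=(q-1)/(k_1+k_2)$; equivalently, every nonzero element of $\mathbb{Z}_q$ has a unique representation $ab$ with $a\in[-k_1,k_2]^\ast$, $b\in B$ (and $0$ has no such representation). A perfect $B[-k_1,k_2](q)$ set is called purely singular if for every prime $p\mid q$ there is an integer $k$ with $0<k\le k_2$ and $p\mid k$. *)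

theory Defs
  imports Main "HOL-Computational_Algebra.Primes"
begin

text \<open>Z_q is represented by the residues {0..<q} of int; multiplication is taken mod q.\<close>

definition mult_range :: "int \<Rightarrow> int \<Rightarrow> int set" where
  "mult_range k1 k2 = {a. - k1 \<le> a \<and> a \<le> k2 \<and> a \<noteq> 0}"

definition splitter_image :: "int \<Rightarrow> int \<Rightarrow> int \<Rightarrow> int \<Rightarrow> int set" where
  "splitter_image k1 k2 q b = (\<lambda>a. (a * b) mod q) ` mult_range k1 k2"

definition splitter_set :: "int \<Rightarrow> int \<Rightarrow> int \<Rightarrow> int set \<Rightarrow> bool" where
  "splitter_set k1 k2 q B \<longleftrightarrow>
     B \<subseteq> {0..<q} \<and>
     (\<forall>b\<in>B. inj_on (\<lambda>a. (a * b) mod q) (mult_range k1 k2) \<and>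
              0 \<notin> splitter_image k1 k2 q b) \<and>
     (\<forall>b\<in>B. \<forall>b'\<in>B. b \<noteq> b' \<longrightarrow> splitter_image k1 k2 q b \<inter> splitter_image k1 k2 q b' = {})"

definition perfect_splitter_set :: "int \<Rightarrow> int \<Rightarrow> int \<Rightarrow> int set \<Rightarrow> bool" where
  "perfect_splitter_set k1 k2 q B \<longleftrightarrow>
     splitter_set k1 k2 q B \<and> int (card B) * (k1 + k2) = q - 1"

definition purely_singular :: "int \<Rightarrow> int \<Rightarrow> int \<Rightarrow> int set \<Rightarrow> bool" where
  "purely_singular k1 k2 q B \<longleftrightarrow>
     perfect_splitter_set k1 k2 q B \<and>
     (\<forall>p::int. prime p \<and> p dvd q \<longrightarrow> (\<exists>k. 0 < k \<and> k \<le> k2 \<and> p dvd k))"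

end

theory Submission
  imports Defs
begin

lemma count_odd:
  fixes c :: int
  shows "card {x. c \<le> x \<and> x < c + 2 * int j \<and> odd x} = j"
proof (induction j)
  case 0
  have "{x. c \<le> x \<and> x < c + 2 * int 0 \<and> odd x} = {}" by auto
  then show ?case by (metis card.empty)
next
  case (Suc j)
  let ?S = "{x. c \<le> x \<and> x < c + 2 * int j \<and> odd x}"
  define y where "y = (if odd c then c + 2*int j else c + 2*int j + 1)"
  have eq: "{x. c \<le> x \<and> x < c + 2 * int (Suc j) \<and> odd x} = insert y ?S"
  proof (rule set_eqI)
    fix x
    show "x \<in> {x. c \<le> x \<and> x < c + 2 * int (Suc j) \<and> odd x} \<longleftrightarrow> x \<in> insert y ?S"
      unfolding y_def by (cases "odd c") (auto, presburger+)
  qed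
  have fin: "finite ?S" by (rule finite_subset[of _ "{c..<c + 2*int j}"]) auto
  have "y \<notin> ?S" unfolding y_def by auto
  then show ?case using eq fin Suc by simp
qed

lemma pow3:
  "\<exists>u::int. (3::int)^(2^(Suc k)) = 1 + 2^(k+3) * (2*u+1)"
proof (induction k)
  case 0
  show ?case by (rule exI[of _ 0]) simp
next
  case (Suc k)
  then obtain u where u: "(3::int)^(2^(Suc k)) = 1 + 2^(k+3) * (2*u+1)" by blast
  have "(3::int)^(2^(Suc (Suc k))) = ((3::int)^(2^(Suc k)))^2"
    by (simp add: power_mult[symmetric] mult.commute)
  also have "\<dots> = 1 + 2^(Suc k+3) * (2*(u + 2^(k+1)*(2*u+1)^2)+1)"
    unfolding u by (simp add: power2_eq_square algebra_simps power_add)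
  finally show ?case by blast
qed

lemma lemmaG:
  fixes g :: "'x \<Rightarrow> int" and S :: "'x set" and L :: nat
  assumes L4: "L \<ge> 4" and finS: "finite S" and cardS: "card S = 2^(L-2)"
    and odd: "\<And>s. s \<in> S \<Longrightarrow> odd (g s)"
    and inj: "\<And>s s'. s \<in> S \<Longrightarrow> s' \<in> S \<Longrightarrow> g s mod 2^(L-1) = g s' mod 2^(L-1) \<Longrightarrow> s = s'"
    and no3: "\<And>s s'. s \<in> S \<Longrightarrow> s' \<in> S \<Longrightarrow> (3 * g s) mod 2^L \<noteq> g s' mod 2^L"
  shows False
proof -
  define M :: int where "M = 2^(L-1)"
  have eL0: "L = Suc (L-1)" using L4 by simp
  have M2: "2*M = 2^L" unfolding M_def by (subst (2) eL0) simp
  have Mpos: "M > 0" unfolding M_def by simp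
  have evM: "even M" unfolding M_def using L4 by simp
  define Od where "Od = {x::int. 0 \<le> x \<and> x < 0 + 2 * int (2^(L-2)) \<and> odd x}"
  have cardOd: "card Od = 2^(L-2)" unfolding Od_def by (rule count_odd)
  have eL: "L-1 = Suc (L-2)" using L4 by simp
  have MO: "M = 2 * int (2^(L-2))" unfolding M_def eL by simp
  have "Od \<subseteq> {0..<2 * int (2^(L-2))}" unfolding Od_def by auto
  hence finOd: "finite Od" using finite_subset by blast
  define h where "h s = g s mod M" for s
  have injh: "inj_on h S" unfolding inj_on_def h_def M_def using inj by blast
  have oddmod: "odd (x mod M)" if "odd x" for x
    using that evM by (simp add: odd_iff_mod_2_eq_one mod_mod_cancel)
  have inOd: "x mod M \<in> Od" if "odd x" for x
    unfolding Od_def using pos_mod_sign[OF Mpos, of x] pos_mod_bound[OF Mpos, of x] oddmod[OF that] MO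
    by simp
  have sub: "h ` S \<subseteq> Od" unfolding h_def using odd inOd by blast
  have "card (h ` S) = card Od" using card_image[OF injh] cardS cardOd by simp
  hence hS: "h ` S = Od" using card_subset_eq[OF finOd sub] by simp
  have exF: "\<exists>s'. s' \<in> S \<and> g s' mod M = (3 * g s) mod M" if "s \<in> S" for s
  proof -
    have "(3 * g s) mod M \<in> h ` S" unfolding hS using odd[OF that] by (intro inOd) simp
    then obtain s' where "s' \<in> S" "(3 * g s) mod M = h s'" by (rule imageE)
    then show ?thesis unfolding h_def by metis
  qed
  define F where "F s = (SOME s'. s' \<in> S \<and> g s' mod M = (3 * g s) mod M)" for s
  have F: "F s \<in> S \<and> g (F s) mod M = (3 * g s) mod M" if "s \<in> S" for s
    unfolding F_def using someI_ex[OF exF[OF that]] .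
  have key: "(2*M) dvd (3 * g s - g (F s) - M)" if s: "s \<in> S" for s
  proof -
    have "(3 * g s) mod M = g (F s) mod M" using F[OF s] by simp
    hence "M dvd (3 * g s - g (F s))" by (simp only: mod_eq_dvd_iff)
    then obtain j where j: "3 * g s - g (F s) = M * j" by (auto elim: dvdE)
    have "\<not> (2*M) dvd (3 * g s - g (F s))"
    proof
      assume "(2*M) dvd (3 * g s - g (F s))"
      hence "(3 * g s) mod (2*M) = g (F s) mod (2*M)" by (simp only: mod_eq_dvd_iff)
      hence "(3 * g s) mod 2^L = g (F s) mod 2^L" using M2 by simp
      thus False using no3[OF s] F[OF s] by blast
    qed
    note nd = this
    have "odd j"
    proof
      assume "even j"
      then obtain i where "j = 2*i" by blast
      hence "3 * g s - g (F s) = (2*M)*i" using j by simp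
      thus False using nd by simp
    qed
    then obtain i where "j = 2*i+1" by (metis oddE)
    hence "3 * g s - g (F s) - M = (2*M) * i" using j by (simp add: algebra_simps)
    thus ?thesis by simp
  qed
  have "S \<noteq> {}"
  proof
    assume "S = {}"
    hence "card S = 0" by simp
    with cardS show False by simp
  qed
  then obtain s0 where s0: "s0 \<in> S" by blast
  have iter: "(F^^k) s0 \<in> S \<and> (2*M) dvd (3^k * g s0 - g ((F^^k) s0) - int k * M)" for k
  proof (induction k)
    case 0
    then show ?case using s0 by simp
  next
    case (Suc k)
    define sk where "sk = (F^^k) s0"
    have sk: "sk \<in> S" and d1: "(2*M) dvd (3^k * g s0 - g sk - int k * M)"
      using Suc unfolding sk_def by auto
    have d2: "(2*M) dvd (3 * g sk - g (F sk) - M)" using key[OF sk] .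
    have eq: "3^(Suc k) * g s0 - g (F sk) - int (Suc k) * M
      = 3 * (3^k * g s0 - g sk - int k * M) + (3 * g sk - g (F sk) - M) + (2*M) * int k"
      by (simp add: algebra_simps)
    have "(2*M) dvd (3^(Suc k) * g s0 - g (F sk) - int (Suc k) * M)"
      unfolding eq
    proof (intro dvd_add)
      show "(2*M) dvd 3 * (3^k * g s0 - g sk - int k * M)" using d1 by (rule dvd_mult)
      show "(2*M) dvd (3 * g sk - g (F sk) - M)" by (rule d2)
      show "(2*M) dvd (2*M) * int k" by (rule dvd_triv_left)
    qed
    then show ?case using F[OF sk] unfolding sk_def by simp
  qed
  define r :: nat where "r = 2^(L-3)"
  obtain u where u: "(3::int)^r = 1 + 2^(L-1) * (2*u+1)"
  proof -
    have e1: "Suc (L-4) = L-3" "L-4+3 = L-1" using L4 by auto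
    obtain u where "(3::int)^(2^(Suc (L-4))) = 1 + 2^(L-4+3) * (2*u+1)" using pow3[of "L-4"] by blast
    hence "(3::int)^r = 1 + 2^(L-1) * (2*u+1)" unfolding r_def e1 .
    then show ?thesis by (rule that)
  qed
  have eL3: "L-3 = Suc (L-4)" using L4 by simp
  have r2: "int r = 2 * 2^(L-4)" unfolding r_def eL3 by simp
  have rM: "int r * M = (2*M) * 2^(L-4)" unfolding r2 by (simp add: algebra_simps)
  define sr where "sr = (F^^r) s0"
  have sr: "sr \<in> S" and dr: "(2*M) dvd (3^r * g s0 - g sr - int r * M)"
    using iter[of r] unfolding sr_def by auto
  have dr2: "(2*M) dvd (3^r * g s0 - g sr)"
  proof -
    have "3^r * g s0 - g sr = (3^r * g s0 - g sr - int r * M) + (2*M) * 2^(L-4)"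
      by (subst rM) simp
    moreover have "(2*M) dvd ((3^r * g s0 - g sr - int r * M) + (2*M) * 2^(L-4))"
      by (rule dvd_add[OF dr dvd_triv_left])
    ultimately show ?thesis by (simp only:)
  qed
  have e3: "3^r * g s0 - g s0 = M * (g s0 * (2*u+1))"
    unfolding u M_def by (simp add: algebra_simps)
  have "M dvd (3^r * g s0 - g sr)" using dr2 by (rule dvd_mult_right)
  moreover have "M dvd (3^r * g s0 - g s0)" using e3 by simp
  ultimately have "M dvd ((3^r * g s0 - g sr) - (3^r * g s0 - g s0))" by (rule dvd_diff)
  hence "M dvd (g s0 - g sr)" by simp
  hence "g s0 mod 2^(L-1) = g sr mod 2^(L-1)" unfolding M_def by (simp only: mod_eq_dvd_iff)
  hence "sr = s0" using inj[OF s0 sr] by simp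
  hence "(2*M) dvd (M * (g s0 * (2*u+1)))" using dr2 e3 by simp
  hence "2 dvd (g s0 * (2*u+1))" using Mpos by (simp add: mult.commute[of 2 M])
  thus False using odd[OF s0] by simp
qed


lemma scale_mod:
  fixes x y c N :: int
  assumes "x mod N = y mod N"
  shows "(c*x) mod (c*N) = (c*y) mod (c*N)"
  using assms by (metis mult_mod_right)

theorem theorem3p7:
  fixes k1 k2 :: int and n :: nat
  assumes "0 < k1" and "k1 \<le> k2" and "0 < n" and "k1 + k2 \<ge> 4"
    and "\<exists>B. purely_singular k1 k2 (2 ^ n) B"
  shows "2 ^ n = k1 + k2 + 1"
proof -
  note k1pos = assms(1) and k12 = assms(2) and npos = assms(3) and K4 = assms(4)
  obtain B where pB: "purely_singular k1 k2 (2 ^ n) B" using assms(5) by blast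
  define q :: int where "q = 2^n"
  define R where "R = mult_range k1 k2"
  define K where "K = k1 + k2"
  have sB: "splitter_set k1 k2 q B" and cB: "int (card B) * K = q - 1"
    using pB unfolding purely_singular_def perfect_splitter_set_def q_def K_def by auto
  have Bsub: "B \<subseteq> {0..<q}" and injB: "\<And>b. b \<in> B \<Longrightarrow> inj_on (\<lambda>a. (a * b) mod q) R"
    and nzB: "\<And>b. b \<in> B \<Longrightarrow> 0 \<notin> splitter_image k1 k2 q b"
    and disjB: "\<And>b b'. b \<in> B \<Longrightarrow> b' \<in> B \<Longrightarrow> b \<noteq> b' \<Longrightarrow>
        splitter_image k1 k2 q b \<inter> splitter_image k1 k2 q b' = {}"
    using sB unfolding splitter_set_def R_def by auto
  have qpos: "q > 0" unfolding q_def by simp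
  have finB: "finite B" using Bsub finite_subset by blast
  have imgdef: "splitter_image k1 k2 q b = (\<lambda>a. (a * b) mod q) ` R" for b
    unfolding splitter_image_def R_def ..
  have uniq: "a = a' \<and> b = b'" if "a \<in> R" "a' \<in> R" "b \<in> B" "b' \<in> B"
      "(a*b) mod q = (a'*b') mod q" for a a' b b'
  proof -
    have bb: "b = b'"
    proof (rule ccontr)
      assume "b \<noteq> b'"
      hence "splitter_image k1 k2 q b \<inter> splitter_image k1 k2 q b' = {}" using disjB that by blast
      moreover have "(a*b) mod q \<in> splitter_image k1 k2 q b" unfolding imgdef using that by blast
      moreover have "(a*b) mod q \<in> splitter_image k1 k2 q b'" unfolding imgdef using that by auto
      ultimately show False by blast
    qed
    hence "a = a'" using injB[OF that(3)] that unfolding inj_on_def by auto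
    thus ?thesis using bb by simp
  qed
  have Rdef: "R = {-k1..k2} - {0}" unfolding R_def mult_range_def by auto
  have cardR: "card R = nat K" unfolding Rdef K_def using k1pos k12 by simp
  have cover: "\<exists>a\<in>R. \<exists>b\<in>B. (a*b) mod q = x" if "0 < x" "x < q" for x
  proof -
    define U where "U = (\<Union>b\<in>B. splitter_image k1 k2 q b)"
    have finR: "finite R" unfolding Rdef by simp
    have ci: "card (splitter_image k1 k2 q b) = card R" if "b \<in> B" for b
      unfolding imgdef using card_image[OF injB[OF that]] .
    have "card U = (\<Sum>b\<in>B. card (splitter_image k1 k2 q b))"
      unfolding U_def by (rule card_UN_disjoint) (use finB disjB finR in \<open>auto simp: imgdef\<close>)
    also have "\<dots> = card B * card R" using ci by simp
    finally have "card U = card B * nat K" using cardR by simp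
    hence cU: "int (card U) = q - 1" using cB K4 K_def by simp
    have Usub: "U \<subseteq> {1..<q}"
    proof
      fix y assume "y \<in> U"
      then obtain b where b: "b \<in> B" "y \<in> splitter_image k1 k2 q b" unfolding U_def by blast
      then obtain a where "y = (a*b) mod q" unfolding imgdef by blast
      hence "0 \<le> y" "y < q" using qpos by auto
      moreover have "y \<noteq> 0" using nzB[OF b(1)] b(2) by auto
      ultimately show "y \<in> {1..<q}" by simp
    qed
    have "card U = card {1..<q}" using cU by simp
    hence "U = {1..<q}" using card_subset_eq[OF finite_atLeastLessThan_int Usub] by simp
    hence "x \<in> U" using that by simp
    thus ?thesis unfolding U_def imgdef by auto
  qed
  have Kodd: "odd K"
  proof
    assume "even K"
    hence "even (int (card B) * K)" by simp
    hence "even (q - 1)" using cB by simp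
    moreover have "even q" unfolding q_def using npos by simp
    ultimately show False by simp
  qed
  define A0 where "A0 = {a\<in>R. odd a}"
  define B0 where "B0 = {b\<in>B. odd b}"
  define j where "j = nat ((K+1) div 2)"
  have jK: "2 * int j = K + 1" unfolding j_def using Kodd K4 K_def by (auto elim!: oddE)
  have cardA0: "card A0 = j"
  proof -
    have "A0 = {x. -k1 \<le> x \<and> x < -k1 + 2 * int j \<and> odd x}"
      unfolding A0_def Rdef using jK K_def by auto
    thus ?thesis by (simp only: count_odd)
  qed
  have qj: "q = 2 * int (2^(n-1))"
  proof -
    have "n = Suc (n-1)" using npos by simp
    hence "q = 2 * 2^(n-1)" unfolding q_def by (metis power_Suc)
    thus ?thesis by simp
  qed
  have layer0: "card A0 * card B0 = 2^(n-1)"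
  proof -
    define Od where "Od = {x::int. 0 \<le> x \<and> x < 0 + 2 * int (2^(n-1)) \<and> odd x}"
    have cOd: "card Od = 2^(n-1)" unfolding Od_def by (rule count_odd)
    define G where "G p = (fst p * snd p) mod q" for p :: "int \<times> int"
    have injG: "inj_on G (A0 \<times> B0)"
    proof (rule inj_onI)
      fix p p' assume "p \<in> A0 \<times> B0" "p' \<in> A0 \<times> B0" "G p = G p'"
      thus "p = p'" unfolding G_def A0_def B0_def using uniq by (auto simp: prod_eq_iff)
    qed
    have evq: "even q" using qj by simp
    have oddm: "odd (y mod q) \<longleftrightarrow> odd y" for y
      using evq by (simp add: odd_iff_mod_2_eq_one mod_mod_cancel)
    have "G ` (A0 \<times> B0) = Od"
    proof
      show "G ` (A0 \<times> B0) \<subseteq> Od"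
      proof
        fix y assume "y \<in> G ` (A0 \<times> B0)"
        then obtain a b where ab: "a \<in> A0" "b \<in> B0" "y = (a*b) mod q" unfolding G_def by auto
        have "odd (a*b)" using ab unfolding A0_def B0_def by auto
        hence "odd y" using ab oddm by simp
        moreover have "0 \<le> y" "y < q" using ab qpos by auto
        ultimately show "y \<in> Od" unfolding Od_def using qj by simp
      qed
      show "Od \<subseteq> G ` (A0 \<times> B0)"
      proof
        fix x assume x: "x \<in> Od"
        hence "0 < x" "x < q" "odd x" unfolding Od_def using qj by (auto elim!: oddE)
        then obtain a b where ab: "a \<in> R" "b \<in> B" "(a*b) mod q = x" using cover by blast
        hence "odd (a*b)" using \<open>odd x\<close> oddm by metis
        hence "odd a" "odd b" by auto
        hence "(a,b) \<in> A0 \<times> B0" unfolding A0_def B0_def using ab by auto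
        moreover have "G (a,b) = x" unfolding G_def using ab by simp
        ultimately show "x \<in> G ` (A0 \<times> B0)" by (metis image_eqI)
      qed
    qed
    hence "card (A0 \<times> B0) = card Od" using card_image[OF injG] by simp
    thus ?thesis using cOd card_cartesian_product by metis
  qed
  have finB0: "finite B0" unfolding B0_def using finB by simp
  obtain s where s: "s \<le> n-1" "j = 2^s"
    using layer0 cardA0 divides_primepow_nat[of 2 j "n-1"] by (metis dvd_triv_left prime_nat_iff two_is_prime_nat)
  have cardB0: "card B0 = 2^(n-1-s)"
  proof -
    have "2^s * card B0 = 2^s * 2^(n-1-s)" using layer0 cardA0 s by (simp add: power_add[symmetric])
    thus ?thesis by simp
  qed
  define m where "m = Suc s"
  have Km: "K + 1 = 2^m" unfolding m_def using jK s by simp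
  have m3: "m \<ge> 3"
  proof (rule ccontr)
    assume "\<not> m \<ge> 3"
    hence "m \<le> 2" by simp
    hence "(2::int)^m \<le> 2^2" by (rule power_increasing) simp
    thus False using Km K4 K_def by simp
  qed
  define d where "d = n - m"
  have nmd: "n = m + d" unfolding d_def m_def using s npos by simp
  have cardB0d: "card B0 = 2^d" using cardB0 unfolding d_def m_def by simp
  have X8: "(2::int)^m \<ge> 8"
  proof -
    have "(2::int)^3 \<le> 2^m" using m3 by (rule power_increasing) simp
    thus ?thesis by simp
  qed
  show ?thesis
  proof (cases "d = 0")
    case True
    thus ?thesis using Km nmd K_def by simp
  next
    case dn0: False
    have cBB0: "card B0 \<le> card B" unfolding B0_def using finB by (intro card_mono) auto
    show ?thesis
    proof (cases "d = 1")
      case True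
      define X :: int where "X = 2^m"
      have qX: "q = 2*X" unfolding q_def X_def nmd True by simp
      have c2: "int (card B) \<ge> 2" using cBB0 cardB0d True by simp
      have KX: "K = X - 1" unfolding X_def using Km by simp
      have eq: "int (card B) * (X - 1) = 2*X - 1" using cB qX unfolding KX by simp
      have X8': "X \<ge> 8" using X8 unfolding X_def .
      show ?thesis
      proof (cases "int (card B) = 2")
        case True
        thus ?thesis using eq by simp
      next
        case False
        hence "int (card B) \<ge> 3" using c2 by simp
        hence "int (card B) * (X - 1) \<ge> 3 * (X - 1)" using X8' by (intro mult_right_mono) auto
        thus ?thesis using eq X8' by simp
      qed
    next
      case dn1: False
      have d2: "d \<ge> 2" using dn0 dn1 by simp
      define P :: int where "P = 2^(m-3)"
      have Ppos: "P > 0" unfolding P_def by simp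
      have em: "m = (m-3) + 3" using m3 by simp
      have pm: "(2::int)^m = 8*P" unfolding P_def by (subst em) (simp add: power_add)
      have qP: "q = 8*P*2^d" unfolding q_def nmd power_add pm ..
      have K8: "k1 + k2 + 1 = 8*P" using Km pm K_def by simp
      have k2P: "k2 \<ge> 4*P" using K8 k12 by presburger
      have inR: "a \<in> R" if "-k1 \<le> a" "a \<le> k2" "a \<noteq> 0" for a
        unfolding Rdef using that by simp
      have B0B: "b \<in> B" "odd b" if "b \<in> B0" for b using that unfolding B0_def by auto
      show ?thesis
      proof (cases "k1 < 2*P")
        case True
        have k2b: "k2 \<ge> 6*P" using K8 True by presburger
        show ?thesis
        proof (rule FalseE, rule lemmaG[of "d+2" B0 "\<lambda>b. b"], goal_cases)
          case 1 show ?case using d2 by simp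
        next
          case 2 show ?case by (rule finB0)
        next
          case 3 show ?case using cardB0d by simp
        next
          case (4 s) thus ?case using B0B by simp
        next
          case (5 b b')
          have e: "d+2-1 = d+1" by simp
          have h0: "b mod 2^(d+1) = b' mod 2^(d+1)" using 5 e by simp
          have Nq: "4*P*2^(d+1) = q" unfolding qP by simp
          have "((4*P)*b) mod q = ((4*P)*b') mod q" using scale_mod[OF h0, of "4*P", unfolded Nq] .
          moreover have "4*P \<in> R" using inR k1pos k2P Ppos by simp
          ultimately show ?case using uniq B0B 5 by blast
        next
          case (6 b b')
          show ?case
          proof
            assume "(3 * b) mod 2^(d+2) = b' mod 2^(d+2)"
            note h0 = this
            have Nq: "2*P*2^(d+2) = q" unfolding qP by simp
            have eq6: "2*P*(3*b) = (6*P)*b" by simp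
            have "((6*P)*b) mod q = ((2*P)*b') mod q"
              using scale_mod[OF h0, of "2*P", unfolded Nq eq6] .
            moreover have "6*P \<in> R" "2*P \<in> R" using inR k1pos k2b Ppos by simp_all
            ultimately have "6*P = 2*P" using uniq B0B 6 by blast
            thus False using Ppos by simp
          qed
        qed
      next
        case False
        hence k1b: "k1 \<ge> 2*P" by simp
        have multc: "(e*x) mod N = (e*y) mod N" if "x mod N = y mod N" for e x y N :: int
          using that by (metis mod_mult_right_eq)
        have pm1: "e = 1 \<or> e = -1" if "e \<in> {1,-1::int}" for e using that by auto
        show ?thesis
        proof (rule FalseE, rule lemmaG[of "d+3" "{1,-1::int} \<times> B0" "\<lambda>p. fst p * snd p"], goal_cases)
          case 1 show ?case using d2 by simp
        next
          case 2 show ?case using finB0 by simp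
        next
          case 3 show ?case using cardB0d by (simp add: card_cartesian_product)
        next
          case (4 p) thus ?case using B0B by auto
        next
          case (5 p p')
          obtain e b where p: "p = (e,b)" by (cases p)
          obtain e' b' where p': "p' = (e',b')" by (cases p')
          have ee: "e = 1 \<or> e = -1" "e' = 1 \<or> e' = -1" "b \<in> B0" "b' \<in> B0" using 5 p p' by auto
          have e: "d+3-1 = d+2" by simp
          have h0: "(e*b) mod 2^(d+2) = (e'*b') mod 2^(d+2)" using 5 e p p' by simp
          have Nq: "2*P*2^(d+2) = q" unfolding qP by simp
          have r1: "2*P*(e*b) = (2*P*e)*b" "2*P*(e'*b') = (2*P*e')*b'" by (simp_all add: mult.assoc)
          have "((2*P*e)*b) mod q = ((2*P*e')*b') mod q"
            using scale_mod[OF h0, of "2*P", unfolded Nq r1] .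
          moreover have "2*P*e \<in> R" "2*P*e' \<in> R" using inR k1b k2P Ppos ee by auto
          ultimately have "2*P*e = 2*P*e'" "b = b'" using uniq B0B ee by blast+
          hence "e = e'" "b = b'" using Ppos by auto
          thus ?case using p p' by simp
        next
          case (6 p p')
          obtain e b where p: "p = (e,b)" by (cases p)
          obtain e' b' where p': "p' = (e',b')" by (cases p')
          have ee: "e = 1 \<or> e = -1" "e' = 1 \<or> e' = -1" "b \<in> B0" "b' \<in> B0" using 6 p p' by auto
          have eee: "e*e = 1" using ee by auto
          show ?case
          proof
            assume "(3 * (fst p * snd p)) mod 2^(d+3) = (fst p' * snd p') mod 2^(d+3)"
            hence "(3 * (e*b)) mod 2^(d+3) = (e'*b') mod 2^(d+3)" using p p' by simp
            hence h1: "(e*(3 * (e*b))) mod 2^(d+3) = (e*(e'*b')) mod 2^(d+3)" by (rule multc)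
            have r2: "e*(3 * (e*b)) = 3*b"
            proof -
              have "e*(3 * (e*b)) = 3*b*(e*e)" by (simp add: algebra_simps)
              thus ?thesis using eee by simp
            qed
            have r3: "e*(e'*b') = (e*e')*b'" by (simp add: mult.assoc)
            have h2: "(3*b) mod 2^(d+3) = ((e*e')*b') mod 2^(d+3)" using h1 unfolding r2 r3 .
            have Nq: "P*2^(d+3) = q" unfolding qP by (simp add: power_add)
            have r4: "P*(3*b) = (3*P)*b" "P*((e*e')*b') = (P*e*e')*b'" by (simp_all add: algebra_simps)
            have "((3*P)*b) mod q = ((P*e*e')*b') mod q"
              using scale_mod[OF h2, of P, unfolded Nq r4] .
            moreover have "3*P \<in> R" using inR k1pos k2P Ppos by simp
            moreover have "P*e*e' \<in> R" using inR k1b k2P Ppos ee by auto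
            ultimately have "3*P = P*e*e'" using uniq B0B ee by blast
            thus False using Ppos ee by auto
          qed
        qed
      qed
    qed
  qed
qed

end
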